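(* For every planar forest $F$, $\Delta(F)=\sum_{I}I\otimes(F-I)$, where the sum runs over all biideals $I$ of $F$ (including $I=\emptyset$ and $I$ equal to the whole vertex set).
   Context: Planar rooted trees have their children linearly ordered left to right; a planar forest is a finite, possibly empty, sequence of planar rooted trees ($1$ = empty forest); $\mathcal{H}$ is the free associative unital algebra over a field $K$ on planar rooted trees, with basis the planar forests and product concatenation. $B^+(F)$ is the tree obtained by grafting the trees of $F$ (in order) on a new common root; $\varepsilon(F)=\delta_{F,1}$. $\Delta:\mathcal{H}\to\mathcal{H}\otimes\mathcal{H}$ is the unique linear map with $\Delta(1)=1\otimes1$, $\Delta(xy)=(x\otimes1)\Delta(y)+\Delta(x)(1\otimes y)-x\otimes y$ and $\Delta(B^+(x))=B^+(x)\otimes 1+(\mathrm{Id}\otimes B^+)\Delta(x)$. Orders on vertices of a nonempty forest $F=t_1\cdots t_n$: $s\geq_{high}s'$ iff $s'=s$ or $s'$ is an ancestor of $s$. If $s,s'$ are incomparable for $\geq_{high}$, $s\geq_{left}s'$ iff either $s\in t_i$, $s'\in t_j$ with $i<j$, or $s,s'\in t_i$ and $s\geq_{left}s'$ in the forest obtained from $t_i$ by deleting its root (recursively). A set $I$ of vertices of $F$ is a biideal if for all vertices $s,s'$: ($s\in I$ and $s'\geq_{high}s$) implies $s'\in I$, and ($s\in I$ and $s'\geq_{left}s$) implies $s'\in I$. For such $I$, $I$ also denotes the planar forest formed by the vertices of $I$ with induced edges and left-right order, and $F-I$ the planar forest formed by the remaining vertices. *)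

theory Defs
  imports Main "HOL-Library.Function_Algebras"
begin

text \<open>A planar rooted tree is a root with an ordered list of subtrees;
  a planar forest is a list of planar rooted trees (the empty list is the
  empty forest 1). B+ grafts a forest on a new root.\<close>

datatype ptree = Node "ptree list"

type_synonym forest = "ptree list"

fun children :: "ptree \<Rightarrow> forest" where
  "children (Node ts) = ts"

definition Bplus :: "forest \<Rightarrow> ptree" where
  "Bplus F = Node F"

text \<open>A vertex of a forest F = t_0 ... t_(n-1) is addressed by a nonempty list
  i # p: the root of t_i is [i], and i # p with p nonempty is the vertex with
  address p in the forest obtained from t_i by deleting its root.\<close>

fun is_vertex :: "forest \<Rightarrow> nat list \<Rightarrow> bool" where
  "is_vertex F [] = False"
| "is_vertex F (i # p) = (i < length F \<and> (p = [] \<or> is_vertex (children (F ! i)) p))"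

definition vertices :: "forest \<Rightarrow> nat list set" where
  "vertices F = {p. is_vertex F p}"

text \<open>s \<ge>_high s' iff s' = s or s' is an ancestor of s, i.e. the address of s'
  is a prefix of the address of s.\<close>

definition high_ge :: "nat list \<Rightarrow> nat list \<Rightarrow> bool" where
  "high_ge s s' \<longleftrightarrow> (\<exists>u. s = s' @ u)"

fun lft :: "nat list \<Rightarrow> nat list \<Rightarrow> bool" where
  "lft (i # p) (j # q) = (i < j \<or> (i = j \<and> lft p q))"
| "lft _ _ = False"

definition left_ge :: "nat list \<Rightarrow> nat list \<Rightarrow> bool" where
  "left_ge s s' \<longleftrightarrow> \<not> high_ge s s' \<and> \<not> high_ge s' s \<and> lft s s'"

definition biideal :: "forest \<Rightarrow> nat list set \<Rightarrow> bool" where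
  "biideal F I \<longleftrightarrow> I \<subseteq> vertices F \<and>
     (\<forall>s\<in>I. \<forall>s'\<in>vertices F. high_ge s' s \<longrightarrow> s' \<in> I) \<and>
     (\<forall>s\<in>I. \<forall>s'\<in>vertices F. left_ge s' s \<longrightarrow> s' \<in> I)"

text \<open>restr F S is the planar forest formed by the vertices of F lying in S,
  with induced edges and left-right order; when a vertex is not in S, its
  children's restricted forests are placed (in order) at its level. This is
  the induced planar forest for sets S closed under descendants (biideals)
  or under ancestors (complements of biideals), the only cases used.\<close>

fun restr_aux :: "nat \<Rightarrow> forest \<Rightarrow> nat list set \<Rightarrow> forest"
and restr_t :: "ptree \<Rightarrow> nat list set \<Rightarrow> forest" where
  "restr_aux k [] S = []"
| "restr_aux k (t # ts) S = restr_t t {p. k # p \<in> S} @ restr_aux (Suc k) ts S"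
| "restr_t (Node ts) S =
     (if [] \<in> S then [Node (restr_aux 0 ts S)] else restr_aux 0 ts S)"

definition restr :: "forest \<Rightarrow> nat list set \<Rightarrow> forest" where
  "restr F S = restr_aux 0 F S"

text \<open>An element of H \<otimes> H is given by its coefficients on the basis
  F \<otimes> G of pairs of planar forests.\<close>

type_synonym 'k tens = "forest \<times> forest \<Rightarrow> 'k"

definition tens :: "forest \<Rightarrow> forest \<Rightarrow> 'k::field tens" where
  "tens F G = (\<lambda>p. if p = (F, G) then 1 else 0)"

text \<open>(x \<otimes> 1) T for a forest x (left multiplication in the first factor).\<close>
definition mult_left :: "forest \<Rightarrow> 'k::field tens \<Rightarrow> 'k tens" where
  "mult_left x T = (\<lambda>(A, B). if take (length x) A = x then T (drop (length x) A, B) else 0)"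

text \<open>T (1 \<otimes> y) for a forest y (right multiplication in the second factor).\<close>
definition mult_right :: "forest \<Rightarrow> 'k::field tens \<Rightarrow> 'k tens" where
  "mult_right y T = (\<lambda>(A, B). if drop (length B - length y) B = y \<and> length y \<le> length B
      then T (A, take (length B - length y) B) else 0)"

definition id_Bplus :: "'k::field tens \<Rightarrow> 'k tens" where
  "id_Bplus T = (\<lambda>(A, B). case B of [Node ts] \<Rightarrow> T (A, ts) | _ \<Rightarrow> 0)"

text \<open>D is (the restriction to the basis of planar forests of) a linear map
  H \<rightarrow> H \<otimes> H satisfying the defining equations of \<Delta>. Since all maps
  involved are linear, it suffices to impose them on basis elements.\<close>

definition is_Delta :: "(forest \<Rightarrow> 'k::field tens) \<Rightarrow> bool" where
  "is_Delta D \<longleftrightarrow>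
     D [] = tens [] [] \<and>
     (\<forall>x y. D (x @ y) = mult_left x (D y) + mult_right y (D x) - tens x y) \<and>
     (\<forall>x. D [Bplus x] = tens [Bplus x] [] + id_Bplus (D x))"

end

theory Submission
  imports Defs
begin

definition shiftS :: "nat list set \<Rightarrow> nat list set" where
  "shiftS X = {Suc i # p | i p. i # p \<in> X}"

definition unshift :: "nat list set \<Rightarrow> nat list set" where
  "unshift X = {i # p | i p. Suc i # p \<in> X}"

definition V1 :: "ptree \<Rightarrow> nat list set" where
  "V1 t = {0 # p | p. p = [] \<or> is_vertex (children t) p}"

lemma vert_ne: "p \<in> vertices F \<Longrightarrow> p \<noteq> []"
  by (cases p) (auto simp: vertices_def)

lemma nil_notin_V: "[] \<notin> vertices F"
  using vert_ne by blast

lemma V_nil: "vertices [] = {}"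
  by (auto simp: vertices_def elim: is_vertex.elims)

lemma V_cons: "vertices (t # G) = V1 t \<union> shiftS (vertices G)"
proof -
  have "p \<in> vertices (t # G) \<longleftrightarrow> p \<in> V1 t \<union> shiftS (vertices G)" for p
  proof (cases p)
    case Nil then show ?thesis by (auto simp: vertices_def V1_def shiftS_def)
  next
    case (Cons i q)
    then show ?thesis by (cases i) (auto simp: vertices_def V1_def shiftS_def)
  qed
  then show ?thesis by blast
qed

lemma V_single: "vertices [t] = V1 t"
  using V_cons[of t "[]"] by (simp add: V_nil shiftS_def)

lemma V1_Node: "V1 (Node ts) = insert [0] (Cons 0 ` vertices ts)"
  by (auto simp: V1_def vertices_def)

lemma restr_aux_Suc: "restr_aux (Suc k) G S = restr_aux k G (unshift S)"
  by (induction G arbitrary: k) (auto simp: unshift_def)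

lemma restr_cons: "restr (t # G) S = restr_t t {p. 0 # p \<in> S} @ restr G (unshift S)"
  by (simp add: restr_def restr_aux_Suc)

lemma restr_nil: "restr [] S = []"
  by (simp add: restr_def)

lemma restr_single: "restr [t] S = restr_t t {p. 0 # p \<in> S}"
  by (simp add: restr_def)

lemma restr_empty: "restr_aux k F {} = []" "restr_t t {} = []"
  by (induction k F "{}::nat list set" and t "{}::nat list set" rule: restr_aux_restr_t.induct) auto

lemma restr_aux_insert_nil: "restr_aux k F (insert [] S) = restr_aux k F S"
  by (induction F arbitrary: k) auto

lemma unshift_shiftS: "[] \<notin> X \<Longrightarrow> unshift (shiftS X) = X"
  by (auto simp: unshift_def shiftS_def) (metis neq_Nil_conv)

lemma unshift_V1: "unshift (V1 t) = {}"
  by (auto simp: unshift_def V1_def)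

lemma unshift_Un: "unshift (A \<union> B) = unshift A \<union> unshift B"
  by (auto simp: unshift_def)

lemma size_lt1: "G \<noteq> [] \<Longrightarrow> size_list size [t] < size_list size (t # G)"
  by (cases G) auto

lemma restr_full: "restr F (vertices F) = F"
proof (induction F rule: measure_induct_rule[of "size_list size"])
  case (less F)
  show ?case
  proof (cases F)
    case Nil then show ?thesis by (simp add: restr_nil)
  next
    case (Cons t G)
    obtain ts where t: "t = Node ts" by (cases t)
    have "size_list size ts < size_list size F" using Cons t by simp
    then have IH1: "restr ts (vertices ts) = ts" using less by blast
    have "size_list size G < size_list size F" using Cons by simp
    then have IH2: "restr G (vertices G) = G" using less by blast
    have e1: "{p. 0 # p \<in> vertices (t # G)} = insert [] (vertices ts)"
      by (auto simp: V_cons V1_Node t shiftS_def)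
    have e2: "unshift (vertices (t # G)) = vertices G"
      by (simp add: V_cons unshift_Un unshift_V1 unshift_shiftS nil_notin_V)
    have "restr F (vertices F) = restr_t t (insert [] (vertices ts)) @ G"
      using IH2 by (simp add: Cons restr_cons e1 e2)
    also have "\<dots> = [t] @ G"
      using IH1 by (simp add: t restr_aux_insert_nil restr_def)
    finally show ?thesis by (simp add: Cons)
  qed
qed

lemma shiftS_simps[simp]: "a # p \<in> shiftS X \<longleftrightarrow> (\<exists>i. a = Suc i \<and> i # p \<in> X)" "[] \<notin> shiftS X"
  by (auto simp: shiftS_def)

lemma unshift_simps[simp]: "i # p \<in> unshift X \<longleftrightarrow> Suc i # p \<in> X" "[] \<notin> unshift X"
  by (auto simp: unshift_def)

lemma V1_simps[simp]: "a # p \<in> V1 t \<longleftrightarrow> a = 0 \<and> (p = [] \<or> is_vertex (children t) p)" "[] \<notin> V1 t"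
  by (auto simp: V1_def)

lemma high_ge_Cons[simp]: "high_ge (i # p) (j # q) \<longleftrightarrow> i = j \<and> high_ge p q"
  by (auto simp: high_ge_def)

lemma left_ge_Cons[simp]: "left_ge (i # p) (j # q) \<longleftrightarrow> (if i = j then left_ge p q else i < j)"
  by (auto simp: left_ge_def)

lemma shiftS_mono: "A \<subseteq> B \<Longrightarrow> shiftS A \<subseteq> shiftS B"
  by (auto simp: shiftS_def)

lemma V_cons_E: "x \<in> vertices (t # G) \<Longrightarrow>
   (\<And>p. x = 0 # p \<Longrightarrow> x \<in> V1 t \<Longrightarrow> P) \<Longrightarrow> (\<And>i p. x = Suc i # p \<Longrightarrow> i # p \<in> vertices G \<Longrightarrow> P) \<Longrightarrow> P"
  unfolding V_cons by (cases x) (auto simp: shiftS_def)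

lemma biideal_A:
  assumes "biideal G J"
  shows "biideal (t # G) (V1 t \<union> shiftS J)"
  unfolding biideal_def
proof (intro conjI ballI impI)
  show "V1 t \<union> shiftS J \<subseteq> vertices (t # G)"
    using assms shiftS_mono by (auto simp: biideal_def V_cons)
next
  fix s s' assume s: "s \<in> V1 t \<union> shiftS J" and s': "s' \<in> vertices (t # G)"
    and h: "high_ge s' s"
  from s' show "s' \<in> V1 t \<union> shiftS J"
  proof (rule V_cons_E)
    fix j q assume sq: "s' = Suc j # q" "j # q \<in> vertices G"
    obtain i p where sp: "s = i # p" using s by (cases s) auto
    have "i = Suc j" "high_ge q p" using h sq sp by auto
    then have "j # p \<in> J" using s sp by auto
    moreover have "high_ge (j # q) (j # p)" using \<open>high_ge q p\<close> by simp
    ultimately have "j # q \<in> J" using assms sq unfolding biideal_def by blast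
    then show ?thesis using sq by simp
  qed simp
next
  fix s s' assume s: "s \<in> V1 t \<union> shiftS J" and s': "s' \<in> vertices (t # G)"
    and h: "left_ge s' s"
  from s' show "s' \<in> V1 t \<union> shiftS J"
  proof (rule V_cons_E)
    fix j q assume sq: "s' = Suc j # q" "j # q \<in> vertices G"
    obtain i p where sp: "s = i # p" using s by (cases s) auto
    have "i \<noteq> 0" using h sq sp by (auto split: if_splits)
    then obtain i' where i': "i = Suc i'" by (cases i) auto
    have "i' # p \<in> J" using s sp i' by auto
    moreover have "left_ge (j # q) (i' # p)" using h sq sp i' by (auto split: if_splits)
    ultimately have "j # q \<in> J" using assms sq unfolding biideal_def by blast
    then show ?thesis using sq by simp
  qed simp
qed

lemma biideal_B:
  assumes "biideal [t] I"
  shows "biideal (t # G) I"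
proof -
  have a: "I \<subseteq> V1 t" "\<forall>s\<in>I. \<forall>s'\<in>V1 t. high_ge s' s \<longrightarrow> s' \<in> I"
    "\<forall>s\<in>I. \<forall>s'\<in>V1 t. left_ge s' s \<longrightarrow> s' \<in> I"
    using assms unfolding biideal_def V_single by blast+
  show ?thesis
  unfolding biideal_def
  proof (intro conjI ballI impI)
    show "I \<subseteq> vertices (t # G)" using a unfolding V_cons by blast
  next
    fix s s' assume s: "s \<in> I" and s': "s' \<in> vertices (t # G)" and h: "high_ge s' s"
    have sV: "s \<in> V1 t" using a s by blast
    have "s' \<in> V1 t" using s' h sV by (cases s; cases s'; auto simp: V_cons)
    then show "s' \<in> I" using a s h by blast
  next
    fix s s' assume s: "s \<in> I" and s': "s' \<in> vertices (t # G)" and h: "left_ge s' s"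
    have sV: "s \<in> V1 t" using a s by blast
    have "s' \<in> V1 t" using s' h sV by (cases s; cases s'; auto simp: V_cons split: if_splits)
    then show "s' \<in> I" using a s h by blast
  qed
qed

lemma biideal_C:
  assumes b: "biideal (t # G) I"
  shows "(\<exists>J. biideal G J \<and> I = V1 t \<union> shiftS J) \<or> biideal [t] I"
proof -
  have IV: "I \<subseteq> vertices (t # G)"
    and hi: "\<And>s s'. s \<in> I \<Longrightarrow> s' \<in> vertices (t # G) \<Longrightarrow> high_ge s' s \<Longrightarrow> s' \<in> I"
    and le: "\<And>s s'. s \<in> I \<Longrightarrow> s' \<in> vertices (t # G) \<Longrightarrow> left_ge s' s \<Longrightarrow> s' \<in> I"
    using b unfolding biideal_def by blast+
  have VV: "vertices (t # G) = V1 t \<union> shiftS (vertices G)" by (rule V_cons)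
  show ?thesis
  proof (cases "I \<subseteq> V1 t")
    case True
    have "biideal [t] I" unfolding biideal_def V_single
      using True hi le VV by blast
    then show ?thesis by blast
  next
    case False
    then obtain x where x: "x \<in> I" "x \<notin> V1 t" by blast
    then have "x \<in> shiftS (vertices G)" using IV VV by blast
    then obtain i p where xp: "x = Suc i # p" by (cases x) auto
    have sub: "V1 t \<subseteq> I"
    proof
      fix y assume y: "y \<in> V1 t"
      then obtain q where yq: "y = 0 # q" by (cases y) auto
      have "left_ge y x" using xp yq by simp
      then show "y \<in> I" using le[OF x(1)] y VV by blast
    qed
    define J where "J = unshift I"
    have eq: "I = V1 t \<union> shiftS J"
    proof (intro equalityI subsetI)
      fix z assume z: "z \<in> I"
      show "z \<in> V1 t \<union> shiftS J"
      proof (cases z)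
        case Nil then show ?thesis using z IV nil_notin_V by blast
      next
        case (Cons a r)
        show ?thesis
        proof (cases a)
          case 0
          then have "z \<notin> shiftS (vertices G)" using Cons by simp
          then show ?thesis using z IV VV by blast
        qed (use z Cons in \<open>auto simp: J_def\<close>)
      qed
    next
      fix z assume z: "z \<in> V1 t \<union> shiftS J"
      show "z \<in> I"
      proof (cases "z \<in> V1 t")
        case True then show ?thesis using sub by blast
      next
        case False
        then have "z \<in> shiftS J" using z by blast
        then show ?thesis by (cases z) (auto simp: J_def)
      qed
    qed
    have JV: "J \<subseteq> vertices G"
    proof
      fix z assume z: "z \<in> J"
      then obtain k r where zk: "z = k # r" by (cases z) (auto simp: J_def)
      then have "Suc k # r \<in> I" using z by (simp add: J_def)
      then have "Suc k # r \<in> shiftS (vertices G)" using IV VV by auto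
      then show "z \<in> vertices G" using zk by simp
    qed
    have "biideal G J" unfolding biideal_def
    proof (intro conjI ballI impI JV)
      fix s s' assume s: "s \<in> J" and s': "s' \<in> vertices G" and h: "high_ge s' s"
      obtain k r where sk: "s = k # r" using s by (cases s) (auto simp: J_def)
      obtain k' r' where sk': "s' = k' # r'" using s' nil_notin_V by (cases s') auto
      have "Suc k # r \<in> I" using s sk by (simp add: J_def)
      moreover have "Suc k' # r' \<in> vertices (t # G)" using s' sk' VV by simp
      moreover have "high_ge (Suc k' # r') (Suc k # r)" using h sk sk' by simp
      ultimately have "Suc k' # r' \<in> I" using hi by blast
      then show "s' \<in> J" using sk' by (simp add: J_def)
    next
      fix s s' assume s: "s \<in> J" and s': "s' \<in> vertices G" and h: "left_ge s' s"
      obtain k r where sk: "s = k # r" using s by (cases s) (auto simp: J_def)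
      obtain k' r' where sk': "s' = k' # r'" using s' nil_notin_V by (cases s') auto
      have "Suc k # r \<in> I" using s sk by (simp add: J_def)
      moreover have "Suc k' # r' \<in> vertices (t # G)" using s' sk' VV by simp
      moreover have "left_ge (Suc k' # r') (Suc k # r)" using h sk sk' by simp
      ultimately have "Suc k' # r' \<in> I" using le by blast
      then show "s' \<in> J" using sk' by (simp add: J_def)
    qed
    then show ?thesis using eq by blast
  qed
qed

lemma V_Node: "vertices [Node ts] = insert [0] (Cons 0 ` vertices ts)"
  by (simp add: V_single V1_Node)

lemma biideal_D:
  assumes b: "biideal ts J"
  shows "biideal [Node ts] (Cons 0 ` J)"
proof -
  have JV: "J \<subseteq> vertices ts"
    and hi: "\<And>s s'. s \<in> J \<Longrightarrow> s' \<in> vertices ts \<Longrightarrow> high_ge s' s \<Longrightarrow> s' \<in> J"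
    and le: "\<And>s s'. s \<in> J \<Longrightarrow> s' \<in> vertices ts \<Longrightarrow> left_ge s' s \<Longrightarrow> s' \<in> J"
    using b unfolding biideal_def by blast+
  show ?thesis unfolding biideal_def V_Node
  proof (intro conjI ballI impI)
    show "Cons 0 ` J \<subseteq> insert [0] (Cons 0 ` vertices ts)" using JV by blast
  next
    fix s s' assume s: "s \<in> Cons 0 ` J" and s': "s' \<in> insert [0] (Cons 0 ` vertices ts)"
      and h: "high_ge s' s"
    obtain p where sp: "s = 0 # p" "p \<in> J" using s by blast
    have pne: "p \<noteq> []" using sp JV nil_notin_V by blast
    show "s' \<in> Cons 0 ` J"
    proof (cases "s' = [0]")
      case True then show ?thesis using h sp pne by (simp add: high_ge_def)
    next
      case False
      then obtain q where q: "s' = 0 # q" "q \<in> vertices ts" using s' by blast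
      then have "high_ge q p" using h sp by simp
      then show ?thesis using hi[OF sp(2) q(2)] q by blast
    qed
  next
    fix s s' assume s: "s \<in> Cons 0 ` J" and s': "s' \<in> insert [0] (Cons 0 ` vertices ts)"
      and h: "left_ge s' s"
    obtain p where sp: "s = 0 # p" "p \<in> J" using s by blast
    show "s' \<in> Cons 0 ` J"
    proof (cases "s' = [0]")
      case True then show ?thesis using h sp by (simp add: left_ge_def high_ge_def)
    next
      case False
      then obtain q where q: "s' = 0 # q" "q \<in> vertices ts" using s' by blast
      then have "left_ge q p" using h sp by simp
      then show ?thesis using le[OF sp(2) q(2)] q by blast
    qed
  qed
qed

lemma biideal_E:
  assumes b: "biideal [Node ts] I"
  shows "I = vertices [Node ts] \<or> (\<exists>J. biideal ts J \<and> I = Cons 0 ` J)"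
proof -
  have IV: "I \<subseteq> insert [0] (Cons 0 ` vertices ts)"
    and hi: "\<And>s s'. s \<in> I \<Longrightarrow> s' \<in> insert [0] (Cons 0 ` vertices ts) \<Longrightarrow> high_ge s' s \<Longrightarrow> s' \<in> I"
    and le: "\<And>s s'. s \<in> I \<Longrightarrow> s' \<in> insert [0] (Cons 0 ` vertices ts) \<Longrightarrow> left_ge s' s \<Longrightarrow> s' \<in> I"
    using b unfolding biideal_def V_Node by blast+
  show ?thesis
  proof (cases "[0] \<in> I")
    case True
    have "insert [0] (Cons 0 ` vertices ts) \<subseteq> I"
    proof
      fix y assume y: "y \<in> insert [0] (Cons 0 ` vertices ts)"
      then obtain q where "y = [0] @ q" by auto
      then have "high_ge y [0]" by (simp add: high_ge_def)
      then show "y \<in> I" using hi[OF True y] by blast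
    qed
    then have "I = vertices [Node ts]" using IV unfolding V_Node by blast
    then show ?thesis by blast
  next
    case False
    define J where "J = {p. 0 # p \<in> I}"
    have eq: "I = Cons 0 ` J" using IV False unfolding J_def by auto
    have JV: "J \<subseteq> vertices ts" using IV False unfolding J_def by auto
    have "biideal ts J" unfolding biideal_def
    proof (intro conjI ballI impI JV)
      fix s s' assume s: "s \<in> J" and s': "s' \<in> vertices ts" and h: "high_ge s' s"
      have "0 # s' \<in> I" using hi[of "0 # s" "0 # s'"] s s' h by (auto simp: J_def)
      then show "s' \<in> J" by (simp add: J_def)
    next
      fix s s' assume s: "s \<in> J" and s': "s' \<in> vertices ts" and h: "left_ge s' s"
      have "0 # s' \<in> I" using le[of "0 # s" "0 # s'"] s s' h by (auto simp: J_def)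
      then show "s' \<in> J" by (simp add: J_def)
    qed
    then show ?thesis using eq by blast
  qed
qed

lemma finite_shiftS: "finite X \<Longrightarrow> finite (shiftS X)"
proof -
  assume f: "finite X"
  have "shiftS X \<subseteq> (\<lambda>p. Suc (hd p) # tl p) ` X"
  proof
    fix x assume "x \<in> shiftS X"
    then obtain i p where "x = Suc i # p" "i # p \<in> X" by (auto simp: shiftS_def)
    then show "x \<in> (\<lambda>p. Suc (hd p) # tl p) ` X" by force
  qed
  then show ?thesis using f finite_subset by blast
qed

lemma finite_V: "finite (vertices F)"
proof (induction F rule: measure_induct_rule[of "size_list size"])
  case (less F)
  show ?case
  proof (cases F)
    case Nil then show ?thesis by (simp add: V_nil)
  next
    case (Cons t G)
    obtain ts where t: "t = Node ts" by (cases t)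
    have "size_list size ts < size_list size F" using Cons t by simp
    then have "finite (vertices ts)" using less by blast
    moreover have "size_list size G < size_list size F" using Cons by simp
    then have "finite (vertices G)" using less by blast
    ultimately show ?thesis by (simp add: Cons V_cons t V1_Node finite_shiftS)
  qed
qed

lemma finite_BI: "finite {I. biideal F I}"
proof -
  have "{I. biideal F I} \<subseteq> Pow (vertices F)" by (auto simp: biideal_def)
  then show ?thesis using finite_V finite_subset by blast
qed

lemma mult_left_tens: "mult_left x (tens A B :: 'k::field tens) = tens (x @ A) B"
  by (auto simp: mult_left_def tens_def fun_eq_iff) (metis append_take_drop_id)

lemma mult_right_tens: "mult_right y (tens A B :: 'k::field tens) = tens A (B @ y)"
  by (auto simp: mult_right_def tens_def fun_eq_iff) (metis append_take_drop_id)

lemma id_Bplus_tens: "id_Bplus (tens A B :: 'k::field tens) = tens A [Node B]"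
  by (auto simp: id_Bplus_def tens_def fun_eq_iff split: list.splits ptree.splits)

lemma mult_left_sum: "mult_left x (sum (f :: _ \<Rightarrow> 'k::field tens) S) = (\<Sum>a\<in>S. mult_left x (f a))"
proof -
  have "sum (mult_left x \<circ> f) S = mult_left x (sum f S)"
    by (rule sum_comp_morphism) (auto simp: mult_left_def fun_eq_iff)
  then show ?thesis by simp
qed

lemma mult_right_sum: "mult_right x (sum (f :: _ \<Rightarrow> 'k::field tens) S) = (\<Sum>a\<in>S. mult_right x (f a))"
proof -
  have "sum (mult_right x \<circ> f) S = mult_right x (sum f S)"
    by (rule sum_comp_morphism) (auto simp: mult_right_def fun_eq_iff)
  then show ?thesis by simp
qed

lemma id_Bplus_sum: "id_Bplus (sum (f :: _ \<Rightarrow> 'k::field tens) S) = (\<Sum>a\<in>S. id_Bplus (f a))"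
proof -
  have "sum (id_Bplus \<circ> f) S = id_Bplus (sum f S)"
    by (rule sum_comp_morphism) (auto simp: id_Bplus_def fun_eq_iff split: list.splits ptree.splits)
  then show ?thesis by simp
qed

lemma unshift_diff: "unshift (A - B) = unshift A - unshift B"
  by (auto simp: unshift_def)

lemma unshift_mono: "A \<subseteq> B \<Longrightarrow> unshift A \<subseteq> unshift B"
  by (auto simp: unshift_def)

lemma unshift_V: "unshift (vertices (t # G)) = vertices G"
  by (simp add: V_cons unshift_Un unshift_V1 unshift_shiftS nil_notin_V)

lemma restr_emptyset: "restr F {} = []"
  by (simp add: restr_def restr_empty)

lemma restr_a1:
  assumes "J \<subseteq> vertices G"
  shows "restr (t # G) (V1 t \<union> shiftS J) = t # restr G J"
proof -
  have "[] \<notin> J" using assms nil_notin_V by blast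
  then have u: "unshift (V1 t \<union> shiftS J) = J"
    by (simp add: unshift_Un unshift_V1 unshift_shiftS)
  have e: "{p. 0 # p \<in> V1 t \<union> shiftS J} = {p. 0 # p \<in> vertices [t]}"
    by (auto simp: V_single)
  have f: "restr_t t {p. 0 # p \<in> vertices [t]} = [t]"
    using restr_full[of "[t]"] unfolding restr_single .
  show ?thesis unfolding restr_cons u e f by simp
qed

lemma restr_a2:
  assumes "J \<subseteq> vertices G"
  shows "restr (t # G) (vertices (t # G) - (V1 t \<union> shiftS J)) = restr G (vertices G - J)"
proof -
  have "[] \<notin> J" using assms nil_notin_V by blast
  then have u: "unshift (vertices (t # G) - (V1 t \<union> shiftS J)) = vertices G - J"
    by (simp add: unshift_diff unshift_V unshift_Un unshift_V1 unshift_shiftS)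
  have e: "{p. 0 # p \<in> vertices (t # G) - (V1 t \<union> shiftS J)} = {}"
    by (auto simp: V_cons)
  show ?thesis unfolding restr_cons u e restr_empty by simp
qed

lemma restr_b1:
  assumes "I \<subseteq> V1 t"
  shows "restr (t # G) I = restr [t] I"
proof -
  have "unshift I = {}" using unshift_mono[OF assms] unshift_V1 by blast
  then show ?thesis unfolding restr_cons[of t G] restr_single by (simp add: restr_emptyset)
qed

lemma restr_b2:
  assumes "I \<subseteq> V1 t"
  shows "restr (t # G) (vertices (t # G) - I) = restr [t] (vertices [t] - I) @ G"
proof -
  have "unshift I = {}" using unshift_mono[OF assms] unshift_V1 by blast
  then have u: "unshift (vertices (t # G) - I) = vertices G"
    by (simp add: unshift_diff unshift_V)
  have e: "{p. 0 # p \<in> vertices (t # G) - I} = {p. 0 # p \<in> vertices [t] - I}"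
    by (auto simp: V_cons V_single)
  show ?thesis unfolding restr_cons[of t G] restr_single u e restr_full ..
qed

lemma restr_c1:
  assumes "J \<subseteq> vertices ts"
  shows "restr [Node ts] (Cons 0 ` J) = restr ts J"
proof -
  have "[] \<notin> J" using assms nil_notin_V by blast
  moreover have "{p. 0 # p \<in> Cons 0 ` J} = J" by auto
  ultimately show ?thesis by (simp add: restr_single restr_def)
qed

lemma restr_c2:
  assumes "J \<subseteq> vertices ts"
  shows "restr [Node ts] (vertices [Node ts] - Cons 0 ` J) = [Node (restr ts (vertices ts - J))]"
proof -
  have "{p. 0 # p \<in> vertices [Node ts] - Cons 0 ` J} = insert [] (vertices ts - J)"
    using nil_notin_V[of ts] assms by (auto simp: V_Node)
  then show ?thesis by (simp add: restr_single restr_def restr_aux_insert_nil)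
qed

lemma biideal_full: "biideal F (vertices F)"
  by (simp add: biideal_def)

lemma biideal_emptyset: "biideal F {}"
  by (simp add: biideal_def)

lemma BI_nil: "{I. biideal [] I} = {{}}"
  by (auto simp: biideal_def V_nil)

lemma BI_Node: "{I. biideal [Node ts] I} = insert (vertices [Node ts]) (image (Cons 0) ` {J. biideal ts J})"
  using biideal_E biideal_D biideal_full by blast

lemma BI_cons: "{I. biideal (t # G) I} = (\<lambda>J. V1 t \<union> shiftS J) ` {J. biideal G J} \<union> {I. biideal [t] I}"
  using biideal_A biideal_B biideal_C by blast

lemma BI_inter: "(\<lambda>J. V1 t \<union> shiftS J) ` {J. biideal G J} \<inter> {I. biideal [t] I} = {V1 t}"
proof (intro equalityI subsetI)
  fix x assume x: "x \<in> (\<lambda>J. V1 t \<union> shiftS J) ` {J. biideal G J} \<inter> {I. biideal [t] I}"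
  then obtain J where xJ: "x = V1 t \<union> shiftS J" by blast
  have "x \<subseteq> V1 t" using x by (auto simp: biideal_def V_single)
  then have "shiftS J \<subseteq> V1 t" using xJ by blast
  moreover have "x \<notin> V1 t" if "x \<in> shiftS J" for x using that by (cases x) auto
  ultimately have "shiftS J = {}" by blast
  then show "x \<in> {V1 t}" using xJ by simp
next
  fix x assume x: "x \<in> {V1 t}"
  have e: "V1 t = V1 t \<union> shiftS {}" by (simp add: shiftS_def)
  have "V1 t \<in> (\<lambda>J. V1 t \<union> shiftS J) ` {J. biideal G J}"
    using biideal_emptyset[of G] e by blast
  moreover have "biideal [t] (V1 t)" using biideal_full[of "[t]"] unfolding V_single .
  ultimately show "x \<in> (\<lambda>J. V1 t \<union> shiftS J) ` {J. biideal G J} \<inter> {I. biideal [t] I}"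
    using x by blast
qed

theorem proposition12:
  fixes D :: "forest \<Rightarrow> 'k::field tens" and F :: forest
  assumes "is_Delta D"
  shows "D F = (\<Sum>I \<in> {I. biideal F I}. tens (restr F I) (restr F (vertices F - I)))"
proof (induction F rule: measure_induct_rule[of "size_list size"])
  case (less F)
  have D0: "D [] = tens [] []"
    and Dm: "\<And>x y. D (x @ y) = mult_left x (D y) + mult_right y (D x) - tens x y"
    and DB: "\<And>x. D [Bplus x] = tens [Bplus x] [] + id_Bplus (D x)"
    using assms unfolding is_Delta_def by blast+
  define g where "g F I = (tens (restr F I) (restr F (vertices F - I)) :: 'k tens)" for F I
  show ?case
  proof (cases F)
    case Nil
    then show ?thesis by (simp add: BI_nil D0 restr_nil)
  next
    case (Cons t G)
    obtain ts where t: "t = Node ts" by (cases t)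
    show ?thesis
    proof (cases "G = []")
      case True
      have "size_list size ts < size_list size F" using Cons t by simp
      then have IH: "D ts = sum (g ts) {J. biideal ts J}" using less unfolding g_def by blast
      have nin: "vertices [Node ts] \<notin> image (Cons 0) ` {J. biideal ts J}"
      proof
        assume "vertices [Node ts] \<in> image (Cons 0) ` {J. biideal ts J}"
        then obtain J where J: "biideal ts J" "vertices [Node ts] = Cons 0 ` J" by blast
        have "[0] \<in> vertices [Node ts]" by (simp add: V_Node)
        then have "[0] \<in> Cons 0 ` J" using J(2) by simp
        then have "[] \<in> J" by auto
        moreover have "J \<subseteq> vertices ts" using J(1) unfolding biideal_def by blast
        ultimately show False using nil_notin_V by blast
      qed
      have inj: "inj_on (image (Cons 0)) {J. biideal ts J}"
        by (rule inj_onI) (simp add: inj_image_eq_iff)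
      have fin: "finite (image (Cons 0) ` {J. biideal ts J})" using finite_BI by blast
      have "sum (g [Node ts]) {I. biideal [Node ts] I}
          = g [Node ts] (vertices [Node ts]) + sum (g [Node ts] \<circ> image (Cons 0)) {J. biideal ts J}"
        unfolding BI_Node using nin fin inj by (simp add: sum.reindex)
      also have "g [Node ts] (vertices [Node ts]) = tens [Node ts] []"
        by (simp add: g_def restr_full restr_emptyset)
      also have "sum (g [Node ts] \<circ> image (Cons 0)) {J. biideal ts J}
          = (\<Sum>J\<in>{J. biideal ts J}. id_Bplus (g ts J))"
      proof (rule sum.cong)
        fix J assume "J \<in> {J. biideal ts J}"
        then have JV: "J \<subseteq> vertices ts" by (simp add: biideal_def)
        show "(g [Node ts] \<circ> image (Cons 0)) J = id_Bplus (g ts J)"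
          by (simp add: g_def restr_c1[OF JV] restr_c2[OF JV] id_Bplus_tens)
      qed simp
      also have "\<dots> = id_Bplus (D ts)" by (simp add: IH id_Bplus_sum)
      finally have "sum (g [Node ts]) {I. biideal [Node ts] I} = tens [Node ts] [] + id_Bplus (D ts)" .
      also have "\<dots> = D [Node ts]" using DB[of ts] unfolding Bplus_def by (rule sym)
      finally have "sum (g [Node ts]) {I. biideal [Node ts] I} = D [Node ts]" .
      then show ?thesis using Cons True t unfolding g_def by simp
    next
      case False
      have "size_list size G < size_list size F" using Cons by simp
      then have IHG: "D G = sum (g G) {J. biideal G J}" using less unfolding g_def by blast
      have "size_list size [t] < size_list size F" using Cons False size_lt1 by blast
      then have IHt: "D [t] = sum (g [t]) {J. biideal [t] J}" using less unfolding g_def by blast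
      let ?h = "\<lambda>J. V1 t \<union> shiftS J"
      let ?A = "?h ` {J. biideal G J}"
      let ?B = "{I. biideal [t] I}"
      have finA: "finite ?A" using finite_BI by blast
      have finB: "finite ?B" using finite_BI by blast
      have inj: "inj_on ?h {J. biideal G J}"
      proof (rule inj_onI)
        fix J1 J2 assume J1: "J1 \<in> {J. biideal G J}" and J2: "J2 \<in> {J. biideal G J}"
          and e: "?h J1 = ?h J2"
        have "J1 \<subseteq> vertices G" "J2 \<subseteq> vertices G" using J1 J2 unfolding biideal_def by blast+
        then have "[] \<notin> J1" "[] \<notin> J2" using nil_notin_V by blast+
        then show "J1 = J2" using arg_cong[OF e, of unshift]
          by (simp add: unshift_Un unshift_V1 unshift_shiftS)
      qed
      have sA: "sum (g (t # G)) ?A = mult_left [t] (D G)"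
      proof -
        have "sum (g (t # G)) ?A = sum (g (t # G) \<circ> ?h) {J. biideal G J}"
          using inj by (simp add: sum.reindex)
        also have "\<dots> = (\<Sum>J\<in>{J. biideal G J}. mult_left [t] (g G J))"
        proof (rule sum.cong)
          fix J assume "J \<in> {J. biideal G J}"
          then have JV: "J \<subseteq> vertices G" by (simp add: biideal_def)
          show "(g (t # G) \<circ> ?h) J = mult_left [t] (g G J)"
            unfolding g_def comp_def restr_a1[OF JV] restr_a2[OF JV] mult_left_tens by simp
        qed simp
        also have "\<dots> = mult_left [t] (D G)" by (simp add: IHG mult_left_sum)
        finally show ?thesis .
      qed
      have sB: "sum (g (t # G)) ?B = mult_right G (D [t])"
      proof -
        have "sum (g (t # G)) ?B = (\<Sum>I\<in>?B. mult_right G (g [t] I))"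
        proof (rule sum.cong)
          fix I assume "I \<in> ?B"
          then have IV: "I \<subseteq> V1 t" by (simp add: biideal_def V_single)
          show "g (t # G) I = mult_right G (g [t] I)"
            unfolding g_def restr_b1[OF IV, where G=G] restr_b2[OF IV, where G=G] mult_right_tens ..
        qed simp
        also have "\<dots> = mult_right G (D [t])" by (simp add: IHt mult_right_sum)
        finally show ?thesis .
      qed
      have sC: "sum (g (t # G)) (?A \<inter> ?B) = tens [t] G"
      proof -
        have h0: "?h {} = V1 t" by (simp add: shiftS_def)
        have a1: "restr (t # G) (V1 t) = [t]"
          using restr_a1[OF empty_subsetI, where G=G and t=t] unfolding h0 restr_emptyset .
        have a2: "restr (t # G) (vertices (t # G) - V1 t) = G"
          using restr_a2[OF empty_subsetI, where G=G and t=t] unfolding h0 Diff_empty restr_full .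
        show ?thesis unfolding BI_inter by (simp add: g_def a1 a2)
      qed
      have "sum (g (t # G)) (?A \<union> ?B) + sum (g (t # G)) (?A \<inter> ?B)
          = sum (g (t # G)) ?A + sum (g (t # G)) ?B"
        by (rule sum.union_inter[OF finA finB])
      then have "sum (g (t # G)) {I. biideal (t # G) I}
          = mult_left [t] (D G) + mult_right G (D [t]) - tens [t] G"
        unfolding BI_cons[of t G] sA sB sC by (metis add_diff_cancel_right')
      also have "\<dots> = D ([t] @ G)" by (rule Dm[symmetric])
      finally show ?thesis using Cons unfolding g_def by simp
    qed
  qed
qed

end
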